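(* Let $Q=\{1,2,\dots,p\}$ and, for every $q\in Q$, let $f_q:\mathbb{R}^n\to\mathbb{R}$ be a convex function and $C_q\subset\mathbb{R}^n$ a nonempty closed convex set; set $M_q(x)=\partial f_q(x)+N_{C_q}(x)$. Suppose the set $$A:=\bigcap_{q\in Q}A_q,\qquad A_q:=\operatorname{arg\,min}_{x\in C_q} f_q(x),$$ is nonempty. Let $\sigma:[0,\infty)\to Q$ be a switching signal such that, for each $q\in Q$, $\mu(T_q(\sigma))=\infty$, where $T_q(\sigma):=\{t\in[0,\infty)\mid \sigma(t)=q\}$ and $\mu$ is Lebesgue measure. Then every complete solution $\phi$ of the switching system $\dot x\in -M_{\sigma(t)}(x)$ is such that $\lim_{t\to\infty}\phi(t)$ exists and belongs to $A$.
   Context: $\partial f_q(x)$ denotes the convex-analysis subdifferential $\{y\in\mathbb{R}^n \mid f_q(x')\ge f_q(x)+y\cdot(x'-x)\ \forall x'\in\mathbb{R}^n\}$. $N_{C}(x)$ is the normal cone $\{v\in\mathbb{R}^n\mid v\cdot(x'-x)\le 0\ \forall x'\in C\}$ if $x\in C$, and $N_C(x)=\emptyset$ if $x\notin C$. A switching signal is a function $\sigma:[0,\infty)\to Q$ for which there is a sequence $0=t_0<t_1<t_2<\dots$ (with $t_j\to\infty$) such that $\sigma$ is constant on each $[t_j,t_{j+1})$. Given $\sigma$, a solution is a locally absolutely continuous function $\phi:\operatorname{dom}\phi\to\mathbb{R}^n$, with $\operatorname{dom}\phi$ equal to $[0,T)$, $[0,T]$ or $[0,\infty)$, such that $\dot\phi(t)\in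 -M_{\sigma(t)}(\phi(t))$ for almost every $t\in\operatorname{dom}\phi$. A solution is complete if $\operatorname{dom}\phi=[0,\infty)$. *)

theory Defs
  imports "HOL-Analysis.Analysis"
begin

definition subdiff :: "('a::real_inner \<Rightarrow> real) \<Rightarrow> 'a \<Rightarrow> 'a set" where
  "subdiff f x = {y. \<forall>x'. f x' \<ge> f x + inner y (x' - x)}"

definition normal_cone :: "'a::real_inner set \<Rightarrow> 'a \<Rightarrow> 'a set" where
  "normal_cone C x = (if x \<in> C then {v. \<forall>x'\<in>C. inner v (x' - x) \<le> 0} else {})"

definition Mop :: "('a::real_inner \<Rightarrow> real) \<Rightarrow> 'a set \<Rightarrow> 'a \<Rightarrow> 'a set" where
  "Mop f C x = {y + z | y z. y \<in> subdiff f x \<and> z \<in> normal_cone C x}"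

definition argmin_on :: "('a \<Rightarrow> real) \<Rightarrow> 'a set \<Rightarrow> 'a set" where
  "argmin_on f C = {x \<in> C. \<forall>y\<in>C. f x \<le> f y}"

definition switching_signal :: "nat set \<Rightarrow> (real \<Rightarrow> nat) \<Rightarrow> bool" where
  "switching_signal Q \<sigma> \<longleftrightarrow> (\<forall>t\<ge>0. \<sigma> t \<in> Q) \<and>
     (\<exists>ts::nat \<Rightarrow> real. ts 0 = 0 \<and> strict_mono ts \<and> filterlim ts at_top sequentially \<and>
        (\<forall>j. \<forall>t\<in>{ts j..<ts (Suc j)}. \<sigma> t = \<sigma> (ts j)))"

definition abs_continuous_on :: "real \<Rightarrow> real \<Rightarrow> (real \<Rightarrow> 'a::real_normed_vector) \<Rightarrow> bool" where
  "abs_continuous_on a b \<phi> \<longleftrightarrow>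
     (\<forall>\<epsilon>>0. \<exists>\<delta>>0. \<forall>(m::nat) (u::nat \<Rightarrow> real) v.
        (\<forall>i<m. a \<le> u i \<and> u i \<le> v i \<and> v i \<le> b) \<and>
        (\<forall>i<m. \<forall>j<m. i \<noteq> j \<longrightarrow> v i \<le> u j \<or> v j \<le> u i) \<and>
        (\<Sum>i<m. v i - u i) < \<delta>
        \<longrightarrow> (\<Sum>i<m. norm (\<phi> (v i) - \<phi> (u i))) < \<epsilon>)"

definition loc_abs_continuous :: "(real \<Rightarrow> 'a::real_normed_vector) \<Rightarrow> bool" where
  "loc_abs_continuous \<phi> \<longleftrightarrow> (\<forall>T\<ge>0. abs_continuous_on 0 T \<phi>)"

definition complete_solution ::
  "(nat \<Rightarrow> 'a::euclidean_space \<Rightarrow> 'a set) \<Rightarrow> (real \<Rightarrow> nat) \<Rightarrow> (real \<Rightarrow> 'a) \<Rightarrow> bool" where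
  "complete_solution M \<sigma> \<phi> \<longleftrightarrow> loc_abs_continuous \<phi> \<and>
     (AE t in lebesgue. t \<ge> 0 \<longrightarrow>
        (\<exists>v. (\<phi> has_vector_derivative v) (at t) \<and> - v \<in> M (\<sigma> t) (\<phi> t)))"

end

theory Submission
  imports Defs
begin



lemma emeasure_lebesgue_Ico: "l \<le> u \<Longrightarrow> emeasure lebesgue {l..<(u::real)} = ennreal (u - l)"
  by (simp add: emeasure_completion)

lemma deriv_right:
  fixes h :: "real \<Rightarrow> real"
  assumes "(h has_real_derivative D) (at t)" "D \<le> 0" "e > 0"
  obtains d where "d > 0" "\<And>y. t \<le> y \<Longrightarrow> y < t + d \<Longrightarrow> h y \<le> h t + e * (y - t)"
     "\<And>y. t - d < y \<Longrightarrow> y \<le> t \<Longrightarrow> h t \<le> h y + e * (t - y)"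
proof -
  from assms(1) have "\<forall>e>0. \<exists>d>0. \<forall>y. norm(y - t) < d \<longrightarrow> norm (h y - h t - D * (y - t)) \<le> e * norm (y - t)"
    unfolding has_field_derivative_def has_derivative_at_alt by simp
  then obtain d where d: "d > 0" "\<And>y. norm(y - t) < d \<Longrightarrow> norm (h y - h t - D * (y - t)) \<le> e * norm (y - t)"
    using assms(3) by blast
  show ?thesis
  proof (rule that[OF d(1)])
    fix y assume y: "t \<le> y" "y < t + d"
    have "\<bar>h y - h t - D * (y - t)\<bar> \<le> e * \<bar>y - t\<bar>" using d(2)[of y] y by simp
    moreover have "D * (y - t) \<le> 0" using assms(2) y by (simp add: mult_nonpos_nonneg)
    ultimately show "h y \<le> h t + e * (y - t)" using y by (simp add: abs_le_iff)
  next
    fix y assume y: "t - d < y" "y \<le> t"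
    have "\<bar>h y - h t - D * (y - t)\<bar> \<le> e * \<bar>y - t\<bar>" using d(2)[of y] y by simp
    moreover have "D * (t - y) \<le> 0" using assms(2) y by (simp add: mult_nonpos_nonneg)
    ultimately show "h t \<le> h y + e * (t - y)" using y by (simp add: abs_le_iff algebra_simps)
  qed
qed

lemma ac_nonincr:
  fixes h :: "real \<Rightarrow> real"
  assumes ab: "a \<le> b" and ac: "abs_continuous_on a b h" and N: "N \<in> null_sets lebesgue"
    and der: "\<And>t. t \<in> {a..b} \<Longrightarrow> t \<notin> N \<Longrightarrow> \<exists>D. (h has_real_derivative D) (at t) \<and> D \<le> 0"
  shows "h b \<le> h a"
proof -
  have main: "h b - h a \<le> e * (b - a) + e" if e: "e > 0" for e
  proof -
    from ac[unfolded abs_continuous_on_def, rule_format, OF e]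
    obtain \<delta> where \<delta>: "\<delta> > 0" and ac\<delta>: "\<forall>(m::nat) (u::nat\<Rightarrow>real) v. (\<forall>i<m. a \<le> u i \<and> u i \<le> v i \<and> v i \<le> b) \<and>
        (\<forall>i<m. \<forall>j<m. i \<noteq> j \<longrightarrow> v i \<le> u j \<or> v j \<le> u i) \<and>
        (\<Sum>i<m. v i - u i) < \<delta> \<longrightarrow> (\<Sum>i<m. norm (h (v i) - h (u i))) < e"
      by (elim exE conjE)
    have Nl: "N \<in> sets lebesgue" using N by auto
    obtain U where U: "open U" "N \<subseteq> U" "(U - N) \<in> lmeasurable" "emeasure lebesgue (U - N) < ennreal \<delta>"
      using sets_lebesgue_outer_open[OF Nl \<delta>] by blast
    have Uset: "U \<in> sets lebesgue" using U(1) by auto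
    have "emeasure lebesgue U \<le> emeasure lebesgue ((U - N) \<union> N)"
      by (rule emeasure_mono) (use Nl U in auto)
    also have "\<dots> \<le> emeasure lebesgue (U - N) + emeasure lebesgue N"
      by (rule emeasure_subadditive) (use Nl U in auto)
    also have "\<dots> = emeasure lebesgue (U - N)" using N by auto
    finally have Umeas: "emeasure lebesgue U < ennreal \<delta>" using U(4) by simp
    define P where "P x \<longleftrightarrow> (\<exists>m::nat. \<exists>u v. (\<forall>i<m. a \<le> u i \<and> u i \<le> v i \<and> v i \<le> x \<and> {u i..v i} \<subseteq> U) \<and>
        (\<forall>i<m. \<forall>j<m. i \<noteq> j \<longrightarrow> v i \<le> u j \<or> v j \<le> u i) \<and>
        h x - h a \<le> e * (x - a) + (\<Sum>i<m. h (v i) - h (u i)))" for x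
    have Pa: "P a" unfolding P_def by (rule exI[of _ 0]) simp
    have ext: "P y" if "P x" "a \<le> x" "x \<le> y" "{x..y} \<subseteq> U" for x y
    proof -
      obtain m :: nat and u v where muv: "\<forall>i<m. a \<le> u i \<and> u i \<le> v i \<and> v i \<le> x \<and> {u i..v i} \<subseteq> U"
        "\<forall>i<m. \<forall>j<m. i \<noteq> j \<longrightarrow> v i \<le> u j \<or> v j \<le> u i"
        "h x - h a \<le> e * (x - a) + (\<Sum>i<m. h (v i) - h (u i))"
        using \<open>P x\<close> unfolding P_def by blast
      define u' where "u' = u(m := x)"
      define v' where "v' = v(m := y)"
      have s: "(\<Sum>i<Suc m. h (v' i) - h (u' i)) = (\<Sum>i<m. h (v i) - h (u i)) + (h y - h x)"
        unfolding u'_def v'_def by simp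
      have "\<forall>i<Suc m. a \<le> u' i \<and> u' i \<le> v' i \<and> v' i \<le> y \<and> {u' i..v' i} \<subseteq> U"
        using muv(1) that unfolding u'_def v'_def by (auto simp: less_Suc_eq)
      moreover have "\<forall>i<Suc m. \<forall>j<Suc m. i \<noteq> j \<longrightarrow> v' i \<le> u' j \<or> v' j \<le> u' i"
        using muv(1,2) unfolding u'_def v'_def by (auto simp: less_Suc_eq)
      moreover have "h y - h a \<le> e * (y - a) + (\<Sum>i<Suc m. h (v' i) - h (u' i))"
        unfolding s using muv(3) e that(3) by (smt (verit) mult_left_mono)
      ultimately show ?thesis unfolding P_def by blast
    qed
    have extd: "P y" if "P x" "x \<le> y" "h y \<le> h x + e * (y - x)" for x y
    proof -
      obtain m :: nat and u v where muv: "\<forall>i<m. a \<le> u i \<and> u i \<le> v i \<and> v i \<le> x \<and> {u i..v i} \<subseteq> U"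
        "\<forall>i<m. \<forall>j<m. i \<noteq> j \<longrightarrow> v i \<le> u j \<or> v j \<le> u i"
        "h x - h a \<le> e * (x - a) + (\<Sum>i<m. h (v i) - h (u i))"
        using \<open>P x\<close> unfolding P_def by blast
      have "\<forall>i<m. a \<le> u i \<and> u i \<le> v i \<and> v i \<le> y \<and> {u i..v i} \<subseteq> U" using muv(1) that(2) by force
      moreover have "h y - h a \<le> e * (y - a) + (\<Sum>i<m. h (v i) - h (u i))"
        using muv(3) that(3) by (simp add: algebra_simps)
      ultimately show ?thesis using muv(2) unfolding P_def by blast
    qed
    define S where "S = {x\<in>{a..b}. P x}"
    have aS: "a \<in> S" using Pa ab unfolding S_def by auto
    have bdd: "bdd_above S" unfolding S_def by (rule bdd_aboveI[of _ b]) auto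
    define s where "s = Sup S"
    have as: "a \<le> s" unfolding s_def using aS bdd by (meson cSup_upper)
    have sb: "s \<le> b" unfolding s_def using aS by (intro cSup_least) (auto simp: S_def)
    have upper: "y \<le> s" if "y \<in> S" for y unfolding s_def using that bdd by (meson cSup_upper)
    have approx: "\<exists>x\<in>S. s - d < x \<and> x \<le> s" if "d > 0" for d
    proof -
      have "s - d < Sup S" using that s_def by simp
      then obtain x where "x \<in> S" "s - d < x" using less_cSup_iff[of S] aS bdd by blast
      then show ?thesis using upper by blast
    qed
    have Pb: "P b"
    proof (cases "s \<in> U")
      case True
      then obtain d where d: "d > 0" "ball s d \<subseteq> U" using U(1) open_contains_ball by blast
      obtain x where x: "x \<in> S" "s - d < x" "x \<le> s" using approx d(1) by blast
      define y where "y = min b (s + d/2)"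
      have "{x..y} \<subseteq> ball s d" using x d unfolding y_def by (auto simp: dist_real_def)
      then have Py: "P y" using ext[of x y] x d(2) sb unfolding S_def y_def by auto
      then have "y \<in> S" using as sb d unfolding S_def y_def by auto
      then have "y \<le> s" by (rule upper)
      then have "s = b" "y = b" using d sb unfolding y_def by auto
      then show ?thesis using Py by simp
    next
      case False
      then have "s \<notin> N" using U(2) by auto
      then obtain D where D: "(h has_real_derivative D) (at s)" "D \<le> 0" using der as sb by force
      obtain d where d: "d > 0" "\<And>y. s \<le> y \<Longrightarrow> y < s + d \<Longrightarrow> h y \<le> h s + e * (y - s)"
        "\<And>y. s - d < y \<Longrightarrow> y \<le> s \<Longrightarrow> h s \<le> h y + e * (s - y)"
        using deriv_right[OF D e] by blast
      obtain x where x: "x \<in> S" "s - d < x" "x \<le> s" using approx d(1) by blast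
      have Ps: "P s" using extd[of x s] x d(3)[of x] unfolding S_def by auto
      define y where "y = min b (s + d/2)"
      have Py: "P y" using extd[OF Ps, of y] d(2)[of y] sb d(1) unfolding y_def by auto
      then have "y \<in> S" using as sb d unfolding S_def y_def by auto
      then have "y \<le> s" by (rule upper)
      then have "s = b" "y = b" using d sb unfolding y_def by auto
      then show ?thesis using Py by simp
    qed
    then obtain m :: nat and u v where muv: "\<forall>i<m. a \<le> u i \<and> u i \<le> v i \<and> v i \<le> b \<and> {u i..v i} \<subseteq> U"
        "\<forall>i<m. \<forall>j<m. i \<noteq> j \<longrightarrow> v i \<le> u j \<or> v j \<le> u i"
        "h b - h a \<le> e * (b - a) + (\<Sum>i<m. h (v i) - h (u i))"
      unfolding P_def by blast
    have disj: "disjoint_family_on (\<lambda>i. {u i..<v i}) {..<m}"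
      unfolding disjoint_family_on_def using muv(2) by fastforce
    have "ennreal (\<Sum>i<m. v i - u i) = (\<Sum>i<m. ennreal (v i - u i))"
      using muv(1) by (intro sum_ennreal[symmetric]) auto
    also have "\<dots> = (\<Sum>i<m. emeasure lebesgue {u i..<v i})"
      using muv(1) by (intro sum.cong refl) (simp add: emeasure_lebesgue_Ico)
    also have "\<dots> = emeasure lebesgue (\<Union>i<m. {u i..<v i})"
      by (rule sum_emeasure) (use disj in auto)
    also have "\<dots> \<le> emeasure lebesgue U"
      by (rule emeasure_mono) (use muv(1) Uset in fastforce)+
    finally have "ennreal (\<Sum>i<m. v i - u i) < ennreal \<delta>" using Umeas by simp
    then have "(\<Sum>i<m. v i - u i) < \<delta>" by (metis ennreal_leI not_le)
    then have "(\<Sum>i<m. norm (h (v i) - h (u i))) < e" using ac\<delta> muv(1,2) by blast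
    moreover have "(\<Sum>i<m. h (v i) - h (u i)) \<le> (\<Sum>i<m. norm (h (v i) - h (u i)))"
      by (intro sum_mono) auto
    ultimately show ?thesis using muv(3) by linarith
  qed
  show ?thesis
  proof (rule ccontr)
    assume "\<not> h b \<le> h a"
    define e where "e = (h b - h a) / (b - a + 2)"
    have e: "e > 0" using ab \<open>\<not> h b \<le> h a\<close> unfolding e_def by auto
    have "e * (b - a) + e < e * (b - a + 2)" using e by (simp add: algebra_simps)
    also have "\<dots> = h b - h a" unfolding e_def using ab by simp
    finally show False using main[OF e] by linarith
  qed
qed


lemma ac_sub:
  assumes "abs_continuous_on a b \<phi>" "a \<le> s" "t \<le> b"
  shows "abs_continuous_on s t \<phi>"
  unfolding abs_continuous_on_def
proof (intro allI impI)
  fix e :: real assume e: "e > 0"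
  from assms(1)[unfolded abs_continuous_on_def, rule_format, OF e]
  obtain d where d: "d > 0" and H: "\<forall>(m::nat) (u::nat\<Rightarrow>real) v. (\<forall>i<m. a \<le> u i \<and> u i \<le> v i \<and> v i \<le> b) \<and>
        (\<forall>i<m. \<forall>j<m. i \<noteq> j \<longrightarrow> v i \<le> u j \<or> v j \<le> u i) \<and>
        (\<Sum>i<m. v i - u i) < d \<longrightarrow> (\<Sum>i<m. norm (\<phi> (v i) - \<phi> (u i))) < e"
    by (elim exE conjE)
  show "\<exists>d>0. \<forall>(m::nat) (u::nat\<Rightarrow>real) v. (\<forall>i<m. s \<le> u i \<and> u i \<le> v i \<and> v i \<le> t) \<and>
        (\<forall>i<m. \<forall>j<m. i \<noteq> j \<longrightarrow> v i \<le> u j \<or> v j \<le> u i) \<and>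
        (\<Sum>i<m. v i - u i) < d \<longrightarrow> (\<Sum>i<m. norm (\<phi> (v i) - \<phi> (u i))) < e"
  proof (intro exI[of _ d] conjI allI impI d)
    fix m :: nat and u v :: "nat \<Rightarrow> real"
    assume A: "(\<forall>i<m. s \<le> u i \<and> u i \<le> v i \<and> v i \<le> t) \<and>
        (\<forall>i<m. \<forall>j<m. i \<noteq> j \<longrightarrow> v i \<le> u j \<or> v j \<le> u i) \<and> (\<Sum>i<m. v i - u i) < d"
    then have "(\<forall>i<m. a \<le> u i \<and> u i \<le> v i \<and> v i \<le> b)" using assms(2,3) by force
    then show "(\<Sum>i<m. norm (\<phi> (v i) - \<phi> (u i))) < e" using H A by blast
  qed
qed

lemma ac_cont:
  assumes "abs_continuous_on a b \<phi>"
  shows "continuous_on {a..b} \<phi>"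
  unfolding continuous_on_iff
proof (intro ballI allI impI)
  fix t e assume t: "t \<in> {a..b}" and e: "(e::real) > 0"
  from assms[unfolded abs_continuous_on_def, rule_format, OF e]
  obtain d where d: "d > 0" and H: "\<forall>(m::nat) (u::nat\<Rightarrow>real) v. (\<forall>i<m. a \<le> u i \<and> u i \<le> v i \<and> v i \<le> b) \<and>
        (\<forall>i<m. \<forall>j<m. i \<noteq> j \<longrightarrow> v i \<le> u j \<or> v j \<le> u i) \<and>
        (\<Sum>i<m. v i - u i) < d \<longrightarrow> (\<Sum>i<m. norm (\<phi> (v i) - \<phi> (u i))) < e"
    by (elim exE conjE)
  show "\<exists>d>0. \<forall>x'\<in>{a..b}. dist x' t < d \<longrightarrow> dist (\<phi> x') (\<phi> t) < e"
  proof (intro exI[of _ d] conjI ballI impI d)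
    fix y assume y: "y \<in> {a..b}" "dist y t < d"
    have "norm (\<phi> (max y t) - \<phi> (min y t)) < e"
    proof -
      have pre: "min y t \<le> max y t \<and> max y t - min y t < d" using y by (auto simp: dist_real_def max_def min_def)
      show ?thesis using H[rule_format, of 1 "\<lambda>_. min y t" "\<lambda>_. max y t"] y t pre by auto
    qed
    then show "dist (\<phi> y) (\<phi> t) < e"
      by (cases "y \<le> t") (auto simp: dist_norm norm_minus_commute max_def min_def)
  qed
qed

lemma ac_lip:
  fixes \<phi> :: "real \<Rightarrow> 'a::real_normed_vector" and g :: "real \<Rightarrow> 'b::real_normed_vector"
  assumes "abs_continuous_on a b \<phi>"
    and L: "\<And>u v. u \<in> {a..b} \<Longrightarrow> v \<in> {a..b} \<Longrightarrow> norm (g v - g u) \<le> L * norm (\<phi> v - \<phi> u)"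
  shows "abs_continuous_on a b g"
  unfolding abs_continuous_on_def
proof (intro allI impI)
  fix e :: real assume e: "e > 0"
  define L' where "L' = \<bar>L\<bar> + 1"
  have L': "L' > 0" unfolding L'_def by simp
  from assms(1)[unfolded abs_continuous_on_def, rule_format, of "e / L'"] e L'
  obtain d where d: "d > 0" and H: "\<forall>(m::nat) (u::nat\<Rightarrow>real) v. (\<forall>i<m. a \<le> u i \<and> u i \<le> v i \<and> v i \<le> b) \<and>
        (\<forall>i<m. \<forall>j<m. i \<noteq> j \<longrightarrow> v i \<le> u j \<or> v j \<le> u i) \<and>
        (\<Sum>i<m. v i - u i) < d \<longrightarrow> (\<Sum>i<m. norm (\<phi> (v i) - \<phi> (u i))) < e / L'"
    by (auto elim!: exE)
  show "\<exists>d>0. \<forall>(m::nat) (u::nat\<Rightarrow>real) v. (\<forall>i<m. a \<le> u i \<and> u i \<le> v i \<and> v i \<le> b) \<and>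
        (\<forall>i<m. \<forall>j<m. i \<noteq> j \<longrightarrow> v i \<le> u j \<or> v j \<le> u i) \<and>
        (\<Sum>i<m. v i - u i) < d \<longrightarrow> (\<Sum>i<m. norm (g (v i) - g (u i))) < e"
  proof (intro exI[of _ d] conjI allI impI d)
    fix m :: nat and u v :: "nat \<Rightarrow> real"
    assume A: "(\<forall>i<m. a \<le> u i \<and> u i \<le> v i \<and> v i \<le> b) \<and>
        (\<forall>i<m. \<forall>j<m. i \<noteq> j \<longrightarrow> v i \<le> u j \<or> v j \<le> u i) \<and> (\<Sum>i<m. v i - u i) < d"
    have "(\<Sum>i<m. norm (g (v i) - g (u i))) \<le> (\<Sum>i<m. L' * norm (\<phi> (v i) - \<phi> (u i)))"
    proof (intro sum_mono)
      fix i assume "i \<in> {..<m}"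
      then have "norm (g (v i) - g (u i)) \<le> L * norm (\<phi> (v i) - \<phi> (u i))" using A L by auto
      also have "\<dots> \<le> L' * norm (\<phi> (v i) - \<phi> (u i))" unfolding L'_def
        by (intro mult_right_mono) auto
      finally show "norm (g (v i) - g (u i)) \<le> L' * norm (\<phi> (v i) - \<phi> (u i))" .
    qed
    also have "\<dots> = L' * (\<Sum>i<m. norm (\<phi> (v i) - \<phi> (u i)))" by (simp add: sum_distrib_left)
    also have "\<dots> < L' * (e / L')" using H A L' by (intro mult_strict_left_mono) auto
    also have "\<dots> = e" using L' by simp
    finally show "(\<Sum>i<m. norm (g (v i) - g (u i))) < e" .
  qed
qed

lemma ac_add:
  fixes g h :: "real \<Rightarrow> 'a::real_normed_vector"
  assumes "abs_continuous_on a b g" "abs_continuous_on a b h"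
  shows "abs_continuous_on a b (\<lambda>t. g t + h t)"
  unfolding abs_continuous_on_def
proof (intro allI impI)
  fix e :: real assume e: "e > 0"
  from assms(1)[unfolded abs_continuous_on_def, rule_format, of "e / 2"] e
  obtain d1 where d1: "d1 > 0" and H1: "\<forall>(m::nat) (u::nat\<Rightarrow>real) v. (\<forall>i<m. a \<le> u i \<and> u i \<le> v i \<and> v i \<le> b) \<and>
        (\<forall>i<m. \<forall>j<m. i \<noteq> j \<longrightarrow> v i \<le> u j \<or> v j \<le> u i) \<and>
        (\<Sum>i<m. v i - u i) < d1 \<longrightarrow> (\<Sum>i<m. norm (g (v i) - g (u i))) < e / 2"
    by (auto elim!: exE)
  from assms(2)[unfolded abs_continuous_on_def, rule_format, of "e / 2"] e
  obtain d2 where d2: "d2 > 0" and H2: "\<forall>(m::nat) (u::nat\<Rightarrow>real) v. (\<forall>i<m. a \<le> u i \<and> u i \<le> v i \<and> v i \<le> b) \<and>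
        (\<forall>i<m. \<forall>j<m. i \<noteq> j \<longrightarrow> v i \<le> u j \<or> v j \<le> u i) \<and>
        (\<Sum>i<m. v i - u i) < d2 \<longrightarrow> (\<Sum>i<m. norm (h (v i) - h (u i))) < e / 2"
    by (auto elim!: exE)
  show "\<exists>d>0. \<forall>(m::nat) (u::nat\<Rightarrow>real) v. (\<forall>i<m. a \<le> u i \<and> u i \<le> v i \<and> v i \<le> b) \<and>
        (\<forall>i<m. \<forall>j<m. i \<noteq> j \<longrightarrow> v i \<le> u j \<or> v j \<le> u i) \<and>
        (\<Sum>i<m. v i - u i) < d \<longrightarrow> (\<Sum>i<m. norm ((g (v i) + h (v i)) - (g (u i) + h (u i)))) < e"
  proof (intro exI[of _ "min d1 d2"] conjI allI impI)
    show "min d1 d2 > 0" using d1 d2 by simp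
    fix m :: nat and u v :: "nat \<Rightarrow> real"
    assume A: "(\<forall>i<m. a \<le> u i \<and> u i \<le> v i \<and> v i \<le> b) \<and>
        (\<forall>i<m. \<forall>j<m. i \<noteq> j \<longrightarrow> v i \<le> u j \<or> v j \<le> u i) \<and> (\<Sum>i<m. v i - u i) < min d1 d2"
    have "(\<Sum>i<m. norm ((g (v i) + h (v i)) - (g (u i) + h (u i)))) \<le>
          (\<Sum>i<m. norm (g (v i) - g (u i)) + norm (h (v i) - h (u i)))"
      by (intro sum_mono) (metis add_diff_add norm_triangle_ineq)
    also have "\<dots> = (\<Sum>i<m. norm (g (v i) - g (u i))) + (\<Sum>i<m. norm (h (v i) - h (u i)))"
      by (simp add: sum.distrib)
    also have "\<dots> < e / 2 + e / 2" using A H1 H2 by (intro add_strict_mono) auto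
    finally show "(\<Sum>i<m. norm ((g (v i) + h (v i)) - (g (u i) + h (u i)))) < e" by simp
  qed
qed

lemma ac_lin: "abs_continuous_on a b (\<lambda>t::real. c * t)"
proof -
  have "abs_continuous_on a b (\<lambda>t::real. t)"
    unfolding abs_continuous_on_def
  proof (intro allI impI)
    fix e :: real assume e: "e > 0"
    show "\<exists>d>0. \<forall>(m::nat) (u::nat\<Rightarrow>real) v. (\<forall>i<m. a \<le> u i \<and> u i \<le> v i \<and> v i \<le> b) \<and>
        (\<forall>i<m. \<forall>j<m. i \<noteq> j \<longrightarrow> v i \<le> u j \<or> v j \<le> u i) \<and>
        (\<Sum>i<m. v i - u i) < d \<longrightarrow> (\<Sum>i<m. norm (v i - u i)) < e"
    proof (intro exI[of _ e] conjI allI impI e)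
      fix m :: nat and u v :: "nat \<Rightarrow> real"
      assume A: "(\<forall>i<m. a \<le> u i \<and> u i \<le> v i \<and> v i \<le> b) \<and>
        (\<forall>i<m. \<forall>j<m. i \<noteq> j \<longrightarrow> v i \<le> u j \<or> v j \<le> u i) \<and> (\<Sum>i<m. v i - u i) < e"
      have "(\<Sum>i<m. norm (v i - u i)) = (\<Sum>i<m. v i - u i)" using A by (intro sum.cong) auto
      then show "(\<Sum>i<m. norm (v i - u i)) < e" using A by simp
    qed
  qed
  then show ?thesis
    by (rule ac_lip[where L="\<bar>c\<bar>"]) (simp add: right_diff_distrib[symmetric] abs_mult)
qed

lemma ac_sq:
  fixes \<phi> :: "real \<Rightarrow> 'a::real_inner"
  assumes ac: "abs_continuous_on a b \<phi>"
  shows "abs_continuous_on a b (\<lambda>t. inner (\<phi> t - c) (\<phi> t - c))"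
proof -
  have "compact ((\<lambda>t. \<phi> t - c) ` {a..b})"
    by (intro compact_continuous_image continuous_intros ac_cont[OF ac]) auto
  then obtain B where B: "\<And>t. t \<in> {a..b} \<Longrightarrow> norm (\<phi> t - c) \<le> B"
    by (metis (no_types, lifting) compact_imp_bounded bounded_iff image_eqI)
  show ?thesis
  proof (rule ac_lip[OF ac, where L = "2 * B"])
    fix u v assume uv: "u \<in> {a..b}" "v \<in> {a..b}"
    have "inner (\<phi> v - c) (\<phi> v - c) - inner (\<phi> u - c) (\<phi> u - c) = inner (\<phi> v - \<phi> u) ((\<phi> v - c) + (\<phi> u - c))"
      by (simp add: inner_diff_left inner_diff_right inner_add_right inner_commute)
    then have "norm (inner (\<phi> v - c) (\<phi> v - c) - inner (\<phi> u - c) (\<phi> u - c)) \<le> norm (\<phi> v - \<phi> u) * norm ((\<phi> v - c) + (\<phi> u - c))"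
      by (metis Cauchy_Schwarz_ineq2 real_norm_def)
    also have "\<dots> \<le> norm (\<phi> v - \<phi> u) * (2 * B)"
      using B[OF uv(1)] B[OF uv(2)] norm_triangle_ineq[of "\<phi> v - c" "\<phi> u - c"]
      by (intro mult_left_mono) auto
    finally show "norm (inner (\<phi> v - c) (\<phi> v - c) - inner (\<phi> u - c) (\<phi> u - c)) \<le> 2 * B * norm (\<phi> v - \<phi> u)"
      by (simp add: mult.commute)
  qed
qed

lemma sq_der:
  fixes \<phi> :: "real \<Rightarrow> 'a::real_inner"
  assumes "(\<phi> has_vector_derivative v) (at t)"
  shows "((\<lambda>\<tau>. inner (\<phi> \<tau> - c) (\<phi> \<tau> - c)) has_real_derivative 2 * inner v (\<phi> t - c)) (at t)"
proof -
  have "((\<lambda>\<tau>. \<phi> \<tau> - c) has_vector_derivative v) (at t)"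
    using assms by (auto intro!: derivative_eq_intros)
  then have d: "((\<lambda>\<tau>. \<phi> \<tau> - c) has_derivative (\<lambda>x. x *\<^sub>R v)) (at t)"
    by (simp add: has_vector_derivative_def)
  have "((\<lambda>\<tau>. inner (\<phi> \<tau> - c) (\<phi> \<tau> - c)) has_derivative
      (\<lambda>x. inner (\<phi> t - c) (x *\<^sub>R v) + inner (x *\<^sub>R v) (\<phi> t - c))) (at t)"
    by (rule has_derivative_inner[OF d d])
  moreover have "(\<lambda>x. inner (\<phi> t - c) (x *\<^sub>R v) + inner (x *\<^sub>R v) (\<phi> t - c)) = (*) (2 * inner v (\<phi> t - c))"
    by (rule ext) (simp add: inner_commute algebra_simps)
  ultimately show ?thesis by (simp add: has_field_derivative_def)
qed

lemma cover_ts: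
  fixes ts :: "nat \<Rightarrow> real"
  assumes "strict_mono ts" "filterlim ts at_top sequentially" "ts j0 \<le> t"
  shows "\<exists>j\<ge>j0. ts j \<le> t \<and> t < ts (Suc j)"
proof -
  have "\<forall>\<^sub>F n in sequentially. ts n > t" using assms(2) by (simp add: filterlim_at_top_dense)
  then obtain n where n: "ts n > t" by (auto simp: eventually_sequentially)
  define k where "k = (LEAST n. ts n > t)"
  have k: "ts k > t" unfolding k_def using n by (rule LeastI)
  have kmin: "\<And>i. i < k \<Longrightarrow> ts i \<le> t" unfolding k_def using not_less_Least by force
  have "k \<noteq> 0 \<and> j0 < k"
  proof -
    have "\<not> k \<le> j0"
    proof
      assume "k \<le> j0"
      then have "ts k \<le> ts j0" using assms(1) by (simp add: strict_mono_less_eq)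
      then show False using k assms(3) by linarith
    qed
    then show ?thesis by auto
  qed
  then obtain j where j: "k = Suc j" "j0 \<le> j" by (metis Suc_pred' less_Suc_eq_le not_less0 zero_less_iff_neq_zero less_imp_Suc_add le_add1)
  show ?thesis using j k kmin[of j] by auto
qed


lemma finite_delta:
  fixes P :: "'i \<Rightarrow> real \<Rightarrow> bool"
  assumes "finite I" "\<And>i. i \<in> I \<Longrightarrow> \<exists>d>0. \<forall>d'. 0 < d' \<and> d' \<le> d \<longrightarrow> P i d'"
  shows "\<exists>d>0. \<forall>i\<in>I. \<forall>d'. 0 < d' \<and> d' \<le> d \<longrightarrow> P i d'"
  using assms
proof (induction I rule: finite_induct)
  case empty then show ?case by (auto intro: exI[of _ 1])
next
  case (insert x F)
  obtain d1 where d1: "d1 > 0" "\<forall>i\<in>F. \<forall>d'. 0 < d' \<and> d' \<le> d1 \<longrightarrow> P i d'" using insert by blast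
  obtain d2 where d2: "d2 > 0" "\<forall>d'. 0 < d' \<and> d' \<le> d2 \<longrightarrow> P x d'" using insert by blast
  show ?case using d1 d2 by (intro exI[of _ "min d1 d2"]) auto
qed

theorem theorem1:
  fixes p :: nat
    and f :: "nat \<Rightarrow> 'a::euclidean_space \<Rightarrow> real"
    and C :: "nat \<Rightarrow> 'a set"
    and \<sigma> :: "real \<Rightarrow> nat"
    and \<phi> :: "real \<Rightarrow> 'a"
  assumes f_convex: "\<forall>q\<in>{1..p}. convex_on UNIV (f q)"
    and C_props: "\<forall>q\<in>{1..p}. C q \<noteq> {} \<and> closed (C q) \<and> convex (C q)"
    and A_nonempty: "(\<Inter>q\<in>{1..p}. argmin_on (f q) (C q)) \<noteq> {}"
    and sigma: "switching_signal {1..p} \<sigma>"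
    and sigma_inf: "\<forall>q\<in>{1..p}. emeasure lebesgue {t. 0 \<le> t \<and> \<sigma> t = q} = \<infinity>"
    and sol: "complete_solution (\<lambda>q. Mop (f q) (C q)) \<sigma> \<phi>"
  shows "\<exists>L\<in>(\<Inter>q\<in>{1..p}. argmin_on (f q) (C q)). (\<phi> \<longlongrightarrow> L) at_top"
proof -
  define A where "A = (\<Inter>q\<in>{1..p}. argmin_on (f q) (C q))"
  obtain a where a: "a \<in> A" using A_nonempty unfolding A_def by blast
  have aC: "\<And>q. q \<in> {1..p} \<Longrightarrow> a \<in> C q" and amin: "\<And>q y. q \<in> {1..p} \<Longrightarrow> y \<in> C q \<Longrightarrow> f q a \<le> f q y"
    using a unfolding A_def argmin_on_def by auto
  obtain ts where ts: "ts 0 = 0" "strict_mono ts" "filterlim ts at_top sequentially"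
    "\<And>j t. t \<in> {ts j..<ts (Suc j)} \<Longrightarrow> \<sigma> t = \<sigma> (ts j)"
    using sigma unfolding switching_signal_def by blast
  have sigQ: "\<And>t. 0 \<le> t \<Longrightarrow> \<sigma> t \<in> {1..p}" using sigma unfolding switching_signal_def by blast
  have ac: "\<And>T. 0 \<le> T \<Longrightarrow> abs_continuous_on 0 T \<phi>"
    using sol unfolding complete_solution_def loc_abs_continuous_def by blast
  have "AE t in lebesgue. t \<ge> 0 \<longrightarrow> (\<exists>v. (\<phi> has_vector_derivative v) (at t) \<and> - v \<in> Mop (f (\<sigma> t)) (C (\<sigma> t)) (\<phi> t))"
    using sol unfolding complete_solution_def by blast
  then obtain N where N: "N \<in> null_sets lebesgue"
    and Nd: "\<And>t. t \<ge> 0 \<Longrightarrow> t \<notin> N \<Longrightarrow> \<exists>v. (\<phi> has_vector_derivative v) (at t) \<and> - v \<in> Mop (f (\<sigma> t)) (C (\<sigma> t)) (\<phi> t)"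
    by (elim AE_E3) auto
  have key: "x \<in> C q \<and> inner v (x - b) \<le> f q b - f q x"
    if Mv: "- v \<in> Mop (f q) (C q) x" and bC: "b \<in> C q" for q x v b
  proof -
    obtain y z where yz: "- v = y + z" "y \<in> subdiff (f q) x" "z \<in> normal_cone (C q) x"
      using Mv unfolding Mop_def by blast
    have xC: "x \<in> C q" using yz(3) unfolding normal_cone_def by (auto split: if_splits)
    have z: "inner z (b - x) \<le> 0" using yz(3) xC bC unfolding normal_cone_def by auto
    have y: "f q b \<ge> f q x + inner y (b - x)" using yz(2) unfolding subdiff_def by auto
    have "inner v (x - b) = inner (- v) (b - x)" by (simp add: inner_diff_right)
    also have "\<dots> = inner y (b - x) + inner z (b - x)" using yz(1) by (simp add: inner_add_left)
    finally show ?thesis using xC z y by linarith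
  qed
  define sq where "sq c t = inner (\<phi> t - c) (\<phi> t - c)" for c t
  have sq_nn: "\<And>c t. 0 \<le> sq c t" unfolding sq_def by simp
  have sq_norm: "\<And>c t. sq c t = (norm (\<phi> t - c))\<^sup>2" unfolding sq_def by (simp add: power2_norm_eq_inner)
  have sq_ac: "abs_continuous_on s t (sq c)" if "0 \<le> s" "s \<le> t" for c s t
  proof -
    have "abs_continuous_on 0 t \<phi>" using ac that by auto
    then have "abs_continuous_on s t \<phi>" using ac_sub that by blast
    then show ?thesis unfolding sq_def by (rule ac_sq)
  qed
  have ptw: "\<exists>v. (sq c has_real_derivative 2 * inner v (\<phi> t - c)) (at t) \<and> \<phi> t \<in> C (\<sigma> t) \<and>
     (\<forall>c'. (sq c' has_real_derivative 2 * inner v (\<phi> t - c')) (at t)) \<and>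
     (\<forall>b\<in>C (\<sigma> t). inner v (\<phi> t - b) \<le> f (\<sigma> t) b - f (\<sigma> t) (\<phi> t))"
    if t0: "t \<ge> 0" and tN: "t \<notin> N" for t c
  proof -
    obtain v where v: "(\<phi> has_vector_derivative v) (at t)" "- v \<in> Mop (f (\<sigma> t)) (C (\<sigma> t)) (\<phi> t)"
      using Nd t0 tN by blast
    have "\<phi> t \<in> C (\<sigma> t)" using key[OF v(2) aC[OF sigQ[OF t0]]] by blast
    moreover have "\<forall>b\<in>C (\<sigma> t). inner v (\<phi> t - b) \<le> f (\<sigma> t) b - f (\<sigma> t) (\<phi> t)"
      using key[OF v(2)] by blast
    moreover have "\<forall>c'. (sq c' has_real_derivative 2 * inner v (\<phi> t - c')) (at t)"
      unfolding sq_def using sq_der[OF v(1)] by blast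
    ultimately show ?thesis by blast
  qed
  have V_dec: "sq a t \<le> sq a s" if "0 \<le> s" "s \<le> t" for s t
  proof (rule ac_nonincr[OF that(2) sq_ac[OF that] N])
    fix \<tau> assume \<tau>: "\<tau> \<in> {s..t}" "\<tau> \<notin> N"
    then have "\<tau> \<ge> 0" using that by auto
    from ptw[OF this \<tau>(2), of a] obtain v where v: "(sq a has_real_derivative 2 * inner v (\<phi> \<tau> - a)) (at \<tau>)"
      "\<phi> \<tau> \<in> C (\<sigma> \<tau>)" "\<forall>b\<in>C (\<sigma> \<tau>). inner v (\<phi> \<tau> - b) \<le> f (\<sigma> \<tau>) b - f (\<sigma> \<tau>) (\<phi> \<tau>)" by blast
    have "inner v (\<phi> \<tau> - a) \<le> f (\<sigma> \<tau>) a - f (\<sigma> \<tau>) (\<phi> \<tau>)" using v(3) aC sigQ \<open>\<tau> \<ge> 0\<close> by blast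
    also have "\<dots> \<le> 0" using amin[OF sigQ[OF \<open>\<tau> \<ge> 0\<close>] v(2)] by simp
    finally show "\<exists>D. (sq a has_real_derivative D) (at \<tau>) \<and> D \<le> 0" using v(1) by auto
  qed
  define r where "r = Inf (sq a ` {0..})"
  have bddV: "bdd_below (sq a ` {0..})" using sq_nn by (intro bdd_belowI[of _ 0]) auto
  have r_le: "r \<le> sq a t" if "0 \<le> t" for t unfolding r_def using that bddV by (intro cInf_lower) auto
  have r_approx: "\<exists>T\<ge>0. sq a T < r + e" if "e > 0" for e
  proof -
    have "Inf (sq a ` {0..}) < r + e" using that r_def by simp
    then obtain y where "y \<in> sq a ` {0..}" "y < r + e" using cInf_less_iff[of "sq a ` {0..}"] bddV by auto
    then show ?thesis by auto
  qed
  define R where "R = sqrt (sq a 0)"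
  have inball: "\<phi> t \<in> cball a R" if "0 \<le> t" for t
  proof -
    have "(norm (\<phi> t - a))\<^sup>2 \<le> sq a 0" using V_dec[OF order_refl that] sq_norm by simp
    then have "norm (\<phi> t - a) \<le> R" unfolding R_def by (simp add: real_le_rsqrt)
    then show ?thesis by (simp add: dist_norm norm_minus_commute)
  qed
  obtain xs g where xs: "strict_mono (g :: nat \<Rightarrow> nat)" "((\<lambda>n. \<phi> (real n)) \<circ> g) \<longlonglongrightarrow> xs"
    using seq_compactE[OF compact_imp_seq_compact[OF compact_cball[of a R]], of "\<lambda>n. \<phi> (real n)"] inball
    by (metis of_nat_0_le_iff)
  have cluster: "\<exists>t\<ge>T. norm (\<phi> t - xs) < e" if "e > 0" for e T
  proof -
    have "\<forall>\<^sub>F n in sequentially. dist (\<phi> (real (g n))) xs < e"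
      using xs(2) that unfolding tendsto_iff comp_def by blast
    moreover have "\<forall>\<^sub>F n in sequentially. T \<le> real (g n)"
    proof -
      obtain n0 :: nat where "T \<le> real n0" using real_arch_simple by blast
      then show ?thesis unfolding eventually_sequentially
        using seq_suble[OF xs(1)] by (metis of_nat_le_iff order_trans)
    qed
    ultimately have "\<forall>\<^sub>F n in sequentially. dist (\<phi> (real (g n))) xs < e \<and> T \<le> real (g n)"
      by (rule eventually_conj)
    then obtain n where "dist (\<phi> (real (g n))) xs < e" "T \<le> real (g n)" using eventually_sequentially by auto
    then show ?thesis by (auto simp: dist_norm)
  qed
  have "\<exists>d>0. \<forall>q\<in>{1..p}. \<forall>d'. 0 < d' \<and> d' \<le> d \<longrightarrow> (xs \<notin> argmin_on (f q) (C q) \<longrightarrow>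
      (\<forall>y. norm (y - xs) < d' \<longrightarrow> y \<in> C q \<longrightarrow> xs \<in> C q \<and> f q xs + f q a < 2 * f q y))"
  proof (rule finite_delta)
    fix q assume q: "q \<in> {1..p}"
    show "\<exists>d>0. \<forall>d'. 0 < d' \<and> d' \<le> d \<longrightarrow> (xs \<notin> argmin_on (f q) (C q) \<longrightarrow>
      (\<forall>y. norm (y - xs) < d' \<longrightarrow> y \<in> C q \<longrightarrow> xs \<in> C q \<and> f q xs + f q a < 2 * f q y))"
    proof (cases "xs \<in> argmin_on (f q) (C q)")
      case True then show ?thesis by (auto intro: exI[of _ 1])
    next
      case False
      show ?thesis
      proof (cases "xs \<in> C q")
        case True
        then obtain y0 where "y0 \<in> C q" "f q y0 < f q xs" using False unfolding argmin_on_def by force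
        then have lt: "f q a < f q xs" using amin[OF q] by fastforce
        have "continuous_on UNIV (f q)" using f_convex q by (intro convex_on_continuous) auto
        then have "isCont (f q) xs" by (simp add: continuous_on_eq_continuous_at)
        then obtain d where d: "d > 0" "\<And>y. dist y xs < d \<Longrightarrow> dist (f q y) (f q xs) < (f q xs - f q a) / 2"
          using lt unfolding continuous_at_eps_delta by (metis diff_gt_0_iff_gt half_gt_zero)
        show ?thesis
        proof (rule exI[of _ d], intro conjI[OF d(1)] allI impI)
          fix d' y assume "0 < d' \<and> d' \<le> d" "xs \<notin> argmin_on (f q) (C q)" "norm (y - xs) < d'" "y \<in> C q"
          then have "dist (f q y) (f q xs) < (f q xs - f q a) / 2" using d(2) by (simp add: dist_norm norm_minus_commute)
          then have "\<bar>f q y - f q xs\<bar> < (f q xs - f q a) / 2" by (simp add: dist_real_def)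
          then have "f q xs - f q y < (f q xs - f q a) / 2" using abs_ge_minus_self[of "f q y - f q xs"] by linarith
          then show "xs \<in> C q \<and> f q xs + f q a < 2 * f q y" using True by simp
        qed
      next
        case notC: False
        have "open (- C q)" using C_props q by auto
        then obtain d where d: "d > 0" "ball xs d \<subseteq> - C q" using notC open_contains_ball by blast
        show ?thesis
        proof (rule exI[of _ d], intro conjI[OF d(1)] allI impI)
          fix d' y assume "0 < d' \<and> d' \<le> d" "xs \<notin> argmin_on (f q) (C q)" "norm (y - xs) < d'" "y \<in> C q"
          then have "y \<in> ball xs d" by (simp add: dist_norm norm_minus_commute)
          then show "xs \<in> C q \<and> f q xs + f q a < 2 * f q y" using d(2) \<open>y \<in> C q\<close> by auto
        qed
      qed
    qed
  qed simp
  then obtain \<delta> where \<delta>: "\<delta> > 0" and Dprop: "\<And>q y. q \<in> {1..p} \<Longrightarrow> xs \<notin> argmin_on (f q) (C q) \<Longrightarrow>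
      norm (y - xs) < \<delta> \<Longrightarrow> y \<in> C q \<Longrightarrow> xs \<in> C q \<and> f q xs + f q a < 2 * f q y"
    by (metis order_refl)
  have H_dec: "sq xs s + sq a s \<le> sq xs T + sq a T"
    if T0: "0 \<le> T" and Ts: "T \<le> s" and inb: "\<forall>\<tau>\<in>{T..<s}. norm (\<phi> \<tau> - xs) < \<delta>" for T s
  proof (rule ac_nonincr[where h = "\<lambda>t. sq xs t + sq a t", OF Ts _ _])
    show "abs_continuous_on T s (\<lambda>t. sq xs t + sq a t)" using sq_ac T0 Ts by (intro ac_add) auto
    show "N \<union> {s} \<in> null_sets lebesgue" using N by auto
    fix \<tau> assume \<tau>: "\<tau> \<in> {T..s}" "\<tau> \<notin> N \<union> {s}"
    then have t0: "\<tau> \<ge> 0" and tin: "norm (\<phi> \<tau> - xs) < \<delta>" using T0 inb by auto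
    from ptw[OF t0, of a] \<tau> obtain v where v: "\<phi> \<tau> \<in> C (\<sigma> \<tau>)"
       "\<forall>c'. (sq c' has_real_derivative 2 * inner v (\<phi> \<tau> - c')) (at \<tau>)"
       "\<forall>b\<in>C (\<sigma> \<tau>). inner v (\<phi> \<tau> - b) \<le> f (\<sigma> \<tau>) b - f (\<sigma> \<tau>) (\<phi> \<tau>)" by blast
    have q: "\<sigma> \<tau> \<in> {1..p}" using sigQ t0 by blast
    have va: "inner v (\<phi> \<tau> - a) \<le> f (\<sigma> \<tau>) a - f (\<sigma> \<tau>) (\<phi> \<tau>)" using v(3) aC[OF q] by blast
    have "inner v (\<phi> \<tau> - xs) + inner v (\<phi> \<tau> - a) \<le> 0"
    proof (cases "xs \<in> argmin_on (f (\<sigma> \<tau>)) (C (\<sigma> \<tau>))")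
      case True
      then have "xs \<in> C (\<sigma> \<tau>)" "f (\<sigma> \<tau>) xs \<le> f (\<sigma> \<tau>) (\<phi> \<tau>)" using v(1) unfolding argmin_on_def by auto
      then show ?thesis using v(3) va amin[OF q v(1)] by force
    next
      case False
      from Dprop[OF q False tin v(1)] have "xs \<in> C (\<sigma> \<tau>)" "f (\<sigma> \<tau>) xs + f (\<sigma> \<tau>) a < 2 * f (\<sigma> \<tau>) (\<phi> \<tau>)" by auto
      then show ?thesis using v(3) va by force
    qed
    moreover have "((\<lambda>t. sq xs t + sq a t) has_real_derivative
        2 * inner v (\<phi> \<tau> - xs) + 2 * inner v (\<phi> \<tau> - a)) (at \<tau>)"
      using v(2) by (intro DERIV_add) auto
    ultimately show "\<exists>D. ((\<lambda>t. sq xs t + sq a t) has_real_derivative D) (at \<tau>) \<and> D \<le> 0" by force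
  qed
  have stay: "\<exists>T\<ge>0. \<forall>t\<ge>T. norm (\<phi> t - xs) < e" if e: "0 < e" "e \<le> \<delta>" for e
  proof -
    obtain T0 where T0: "T0 \<ge> 0" "sq a T0 < r + e\<^sup>2 / 2" using r_approx[of "e\<^sup>2/2"] e by auto
    obtain T where T: "T \<ge> T0" "norm (\<phi> T - xs) < e / 2" using cluster[of "e/2" T0] e by auto
    have T0': "T \<ge> 0" using T T0 by linarith
    have VT: "sq a T < r + e\<^sup>2 / 2" using V_dec[OF T0(1) T(1)] T0 by linarith
    have WT: "sq xs T < e\<^sup>2 / 4"
    proof -
      have "(norm (\<phi> T - xs))\<^sup>2 < (e/2)\<^sup>2" using T(2) by (intro power_strict_mono) auto
      then show ?thesis using sq_norm by (simp add: power_divide)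
    qed
    have "sq xs t < e\<^sup>2" if t: "t \<ge> T" for t
    proof (rule ccontr)
      assume "\<not> sq xs t < e\<^sup>2"
      define S where "S = {\<tau>\<in>{T..t}. sq xs \<tau> \<ge> e\<^sup>2}"
      have tS: "t \<in> S" using t \<open>\<not> sq xs t < e\<^sup>2\<close> unfolding S_def by auto
      have cont: "continuous_on {T..t} (sq xs)" using sq_ac[OF T0' t] by (rule ac_cont)
      have "closed S"
      proof -
        have "closed ({T..t} \<inter> sq xs -` {e\<^sup>2..})" using continuous_closed_preimage[OF cont] by auto
        moreover have "S = {T..t} \<inter> sq xs -` {e\<^sup>2..}" unfolding S_def by auto
        ultimately show ?thesis by simp
      qed
      moreover have "bdd_below S" unfolding S_def by (rule bdd_belowI[of _ T]) auto
      ultimately have sS: "Inf S \<in> S" using closed_contains_Inf tS by blast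
      define s where "s = Inf S"
      have s: "T \<le> s" "s \<le> t" "sq xs s \<ge> e\<^sup>2" using sS unfolding s_def S_def by auto
      have below: "\<forall>\<tau>\<in>{T..<s}. norm (\<phi> \<tau> - xs) < \<delta>"
      proof
        fix \<tau> assume \<tau>: "\<tau> \<in> {T..<s}"
        have "\<tau> \<notin> S"
        proof
          assume "\<tau> \<in> S"
          then have "s \<le> \<tau>" unfolding s_def using \<open>bdd_below S\<close> by (rule cInf_lower)
          then show False using \<tau> by auto
        qed
        then have "sq xs \<tau> < e\<^sup>2" using \<tau> s unfolding S_def by auto
        then have "(norm (\<phi> \<tau> - xs))\<^sup>2 < e\<^sup>2" using sq_norm by simp
        then have "norm (\<phi> \<tau> - xs) < e" using e by (simp add: power_less_imp_less_base)
        then show "norm (\<phi> \<tau> - xs) < \<delta>" using e by simp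
      qed
      have "sq xs s + sq a s \<le> sq xs T + sq a T" using H_dec[OF T0' s(1) below] .
      moreover have "r \<le> sq a s" using r_le T0' s(1) by simp
      moreover have "e\<^sup>2 > 0" using e by simp
      ultimately show False using s(3) VT WT by linarith
    qed
    then have "norm (\<phi> t - xs) < e" if "t \<ge> T" for t
      using that e(1) by (metis sq_norm power_less_imp_less_base less_eq_real_def)
    then show ?thesis using T0' by blast
  qed
  have conv: "(\<phi> \<longlongrightarrow> xs) at_top"
    unfolding tendsto_iff
  proof (intro allI impI)
    fix e :: real assume e: "e > 0"
    obtain T where "\<forall>t\<ge>T. norm (\<phi> t - xs) < min e \<delta>" using stay[of "min e \<delta>"] e \<delta> by auto
    then show "\<forall>\<^sub>F t in at_top. dist (\<phi> t) xs < e"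
      unfolding eventually_at_top_linorder by (auto simp: dist_norm)
  qed
  have inA: "xs \<in> argmin_on (f q) (C q)" if q: "q \<in> {1..p}" for q
  proof (rule ccontr)
    assume nA: "xs \<notin> argmin_on (f q) (C q)"
    obtain T where T: "T \<ge> 0" "\<And>t. t \<ge> T \<Longrightarrow> norm (\<phi> t - xs) < \<delta>" using stay[OF \<delta> order_refl] by blast
    have "\<forall>\<^sub>F n in sequentially. ts n \<ge> T" using ts(3) by (simp add: filterlim_at_top)
    then obtain j0 where j0: "ts j0 \<ge> T" by (auto simp: eventually_sequentially)
    have tsnn: "ts j \<ge> 0" for j using ts(1,2) by (metis le0 strict_mono_less_eq)
    define c where "c = (if xs \<in> C q then (f q xs - f q a) / 2 else 1)"
    have c: "c > 0"
    proof (cases "xs \<in> C q")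
      case True
      then obtain y0 where "y0 \<in> C q" "f q y0 < f q xs" using nA unfolding argmin_on_def by force
      then have "f q a < f q xs" using amin[OF q] by fastforce
      then show ?thesis using True unfolding c_def by simp
    qed (simp add: c_def)
    define d where "d j = (if \<sigma> (ts j) = q then ts (Suc j) - ts j else 0)" for j
    have dnn: "d j \<ge> 0" for j unfolding d_def using ts(2) by (simp add: strict_mono_less_eq)
    have step: "sq a (ts (Suc j)) + 2 * c * d j \<le> sq a (ts j)" if j: "j \<ge> j0" for j
    proof (cases "\<sigma> (ts j) = q")
      case False
      then show ?thesis unfolding d_def using V_dec[OF tsnn] ts(2) by (simp add: strict_mono_less_eq)
    next
      case True
      have lt: "ts j < ts (Suc j)" using ts(2) by (simp add: strict_mono_def)
      have Tj: "T \<le> ts j" using j0 j ts(2) by (meson order_trans strict_mono_less_eq)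
      have "(\<lambda>t. sq a t + (2 * c) * t) (ts (Suc j)) \<le> (\<lambda>t. sq a t + (2 * c) * t) (ts j)"
      proof (rule ac_nonincr[OF less_imp_le[OF lt] _ _])
        show "abs_continuous_on (ts j) (ts (Suc j)) (\<lambda>t. sq a t + 2 * c * t)"
          using sq_ac tsnn lt by (intro ac_add ac_lin) auto
        show "N \<union> {ts (Suc j)} \<in> null_sets lebesgue" using N by auto
        fix \<tau> assume \<tau>: "\<tau> \<in> {ts j..ts (Suc j)}" "\<tau> \<notin> N \<union> {ts (Suc j)}"
        then have t0: "\<tau> \<ge> 0" using tsnn[of j] by auto
        have sq: "\<sigma> \<tau> = q" using ts(4)[of \<tau> j] \<tau> True by auto
        have tin: "norm (\<phi> \<tau> - xs) < \<delta>" using T(2) Tj \<tau> by auto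
        from ptw[OF t0, of a] \<tau> obtain v where v: "\<phi> \<tau> \<in> C q"
           "\<forall>c'. (sq c' has_real_derivative 2 * inner v (\<phi> \<tau> - c')) (at \<tau>)"
           "\<forall>b\<in>C q. inner v (\<phi> \<tau> - b) \<le> f q b - f q (\<phi> \<tau>)" using sq by auto
        have va: "inner v (\<phi> \<tau> - a) \<le> f q a - f q (\<phi> \<tau>)" using v(3) aC[OF q] by blast
        from Dprop[OF q nA tin v(1)] have xC: "xs \<in> C q" and fl: "f q xs + f q a < 2 * f q (\<phi> \<tau>)" by auto
        have cc: "2 * c = f q xs - f q a" using xC unfolding c_def by simp
        have "2 * inner v (\<phi> \<tau> - a) + 2 * c \<le> 0" using va fl unfolding cc by linarith
        moreover have "((\<lambda>t. sq a t + 2 * c * t) has_real_derivative 2 * inner v (\<phi> \<tau> - a) + 2 * c * 1) (at \<tau>)"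
          using v(2) by (intro DERIV_add DERIV_cmult DERIV_ident) auto
        ultimately show "\<exists>D. ((\<lambda>t. sq a t + 2 * c * t) has_real_derivative D) (at \<tau>) \<and> D \<le> 0" by force
      qed
      then show ?thesis unfolding d_def using True by (simp add: algebra_simps)
    qed
    have sumb: "sq a (ts (j0 + k)) + 2 * c * (\<Sum>i<k. d (j0 + i)) \<le> sq a (ts j0)" for k
    proof (induction k)
      case 0 then show ?case by simp
    next
      case (Suc k)
      have "sq a (ts (Suc (j0 + k))) + 2 * c * d (j0 + k) \<le> sq a (ts (j0 + k))" using step[of "j0 + k"] by simp
      then show ?case using Suc by (simp add: algebra_simps)
    qed
    define B where "B = sq a (ts j0) / (2 * c)"
    have psum: "(\<Sum>i<k. d (j0 + i)) \<le> B" for k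
    proof -
      have "2 * c * (\<Sum>i<k. d (j0 + i)) \<le> sq a (ts j0)" using sumb[of k] sq_nn[of a "ts (j0 + k)"] by linarith
      then show ?thesis unfolding B_def using c by (simp add: field_simps)
    qed
    define E where "E i = (if \<sigma> (ts (j0 + i)) = q then {ts (j0 + i)..<ts (Suc (j0 + i))} else {})" for i
    have cover: "{t. 0 \<le> t \<and> \<sigma> t = q} \<subseteq> {0..ts j0} \<union> (\<Union>i. E i)"
    proof
      fix t assume t: "t \<in> {t. 0 \<le> t \<and> \<sigma> t = q}"
      show "t \<in> {0..ts j0} \<union> (\<Union>i. E i)"
      proof (cases "t \<le> ts j0")
        case True then show ?thesis using t by auto
      next
        case False
        then obtain j where j: "j \<ge> j0" "ts j \<le> t" "t < ts (Suc j)" using cover_ts[OF ts(2,3), of j0 t] by auto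
        then have "\<sigma> (ts j) = q" using ts(4)[of t j] t by auto
        then have "t \<in> E (j - j0)" unfolding E_def using j by auto
        then show ?thesis by blast
      qed
    qed
    have Emeas: "emeasure lebesgue (E i) = ennreal (d (j0 + i))" for i
      unfolding E_def d_def using ts(2) by (auto simp: emeasure_lebesgue_Ico strict_mono_less_eq)
    have "emeasure lebesgue {t. 0 \<le> t \<and> \<sigma> t = q} \<le> emeasure lebesgue ({0..ts j0} \<union> (\<Union>i. E i))"
      by (rule emeasure_mono[OF cover]) (auto simp: E_def)
    also have "\<dots> \<le> emeasure lebesgue {0..ts j0} + emeasure lebesgue (\<Union>i. E i)"
      by (rule emeasure_subadditive) (auto simp: E_def)
    also have "emeasure lebesgue (\<Union>i. E i) \<le> (\<Sum>i. emeasure lebesgue (E i))"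
      by (rule emeasure_subadditive_countably) (auto simp: E_def)
    also have "(\<Sum>i. emeasure lebesgue (E i)) \<le> ennreal B"
      unfolding Emeas suminf_eq_SUP
    proof (rule SUP_least)
      fix k
      have "(\<Sum>i<k. ennreal (d (j0 + i))) = ennreal (\<Sum>i<k. d (j0 + i))" using dnn by (simp add: sum_ennreal)
      also have "\<dots> \<le> ennreal B" using psum by (rule ennreal_leI)
      finally show "(\<Sum>i<k. ennreal (d (j0 + i))) \<le> ennreal B" .
    qed
    finally have "emeasure lebesgue {t. 0 \<le> t \<and> \<sigma> t = q} \<le> emeasure lebesgue {0..ts j0} + ennreal B"
      by (simp add: add_left_mono)
    moreover have "emeasure lebesgue {0..ts j0} < \<infinity>" using tsnn[of j0] by (simp add: emeasure_completion)
    then have "emeasure lebesgue {0..ts j0} + ennreal B < \<infinity>"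
      by (simp add: less_top[symmetric] ennreal_add_eq_top)
    ultimately have "emeasure lebesgue {t. 0 \<le> t \<and> \<sigma> t = q} < \<infinity>"
      by (rule order.strict_trans1)
    then show False using sigma_inf q by simp
  qed
  show ?thesis using inA conv unfolding A_def by blast
qed
end
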